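(* Let $\mathfrak{g}$ be a $d$-dimensional real Lie algebra and let $\star$ be a star-product on $\mathfrak{g}^{*}$ (in the sense described in the context) satisfying property (P1). For $n\in\mathbb{N}$ let $\mathcal{B}_n=\{p_1,p_2,\ldots,p_{n_d}\}$ be a basis of $\sum_{j=0}^{n}S^j(\mathfrak{g})$ (the polynomials on $\mathfrak{g}^*$ of degree $\le n$) consisting of monomials in $X^1,\ldots,X^d$, ordered by decreasing degree, where $n_d=\dim\sum_{j=0}^n S^j(\mathfrak{g})$. For a monomial $p=X^{i_1}X^{i_2}\cdots X^{i_m}$ put $p^{\star}=X^{i_1}\star X^{i_2}\star\cdots\star X^{i_m}$. Then $\mathcal{B}^{*}_n=\{p_1^{\star},\ldots,p_{n_d}^{\star}\}$ is a spanning set for $\big(\sum_{j=0}^n S^j(\mathfrak{g})\big)[[\epsilon]]$ over $\mathbb{R}[[\epsilon]]$.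
   Context: $\mathfrak{g}$ has basis $X^1,\ldots,X^d$ with structure constants $[X^i,X^j]=c_k^{ij}X^k$ (summation convention); the $X^i$ are simultaneously regarded as linear coordinate functions on $\mathfrak{g}^*\cong\mathbb{R}^d$, so $S(\mathfrak{g})$ is the algebra of polynomial functions on $\mathfrak{g}^*$. The linear Poisson bracket is $\{a,b\}=c_k^{ij}X^k\,\partial_i a\,\partial_j b$. A star-product (deformation quantization) on $\mathfrak{g}^*$ is an $\mathbb{R}[[\epsilon]]$-bilinear product on $C^\infty(\mathfrak{g}^* )[[\epsilon]]$ given by $a\star b=\sum_{j\ge0}\epsilon^j\Pi_j(a,b)$ with $\Pi_j$ bi-differential operators, which is associative, has $\Pi_0(a,b)=ab$, and $\Pi_1(a,b)-\Pi_1(b,a)=\{a,b\}$; polynomials and operators may have coefficients in $\mathbb{R}[[\epsilon]]$. Property (P1): for any polynomials $p_n,q_m$ on $\mathfrak{g}^*$ of degrees $n$ and $m$, $p_n\star q_m=p_nq_m+r_{m+n-1}$ where $r_{m+n-1}$ is a polynomial of degree at most $m+n-1$. *)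

theory Defs
  imports "HOL-Analysis.Analysis" "HOL-Library.Multiset"
          "HOL-Computational_Algebra.Formal_Power_Series"
begin

text \<open>The dual space g* of a d-dimensional real Lie algebra is modelled as real^'d,
  with 'd a finite index type (d = CARD('d)). The basis vector X^i is the linear
  coordinate function x \<mapsto> x $ i.\<close>

definition coord :: "'d::finite \<Rightarrow> real^'d \<Rightarrow> real" where
  "coord i = (\<lambda>x. x $ i)"

definition partial :: "'d::finite \<Rightarrow> (real^'d \<Rightarrow> real) \<Rightarrow> real^'d \<Rightarrow> real" where
  "partial i f = (\<lambda>x. deriv (\<lambda>t. f (x + t *\<^sub>R axis i 1)) 0)"

fun dw :: "'d::finite list \<Rightarrow> (real^'d \<Rightarrow> real) \<Rightarrow> real^'d \<Rightarrow> real" where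
  "dw [] f = f"
| "dw (i # u) f = partial i (dw u f)"

definition smooth :: "(real^'d::finite \<Rightarrow> real) \<Rightarrow> bool" where
  "smooth f \<longleftrightarrow> (\<forall>u. continuous_on UNIV (dw u f) \<and>
      (\<forall>i x. (\<lambda>t. dw u f (x + t *\<^sub>R axis i 1)) differentiable (at 0)))"

text \<open>Elements of C^\<infinity>(g*)[[\<epsilon>]]: sequences of coefficient functions.\<close>
definition fseries :: "(nat \<Rightarrow> real^'d::finite \<Rightarrow> real) \<Rightarrow> bool" where
  "fseries a \<longleftrightarrow> (\<forall>k. smooth (a k))"

definition bidiff_op :: "((real^'d::finite \<Rightarrow> real) \<Rightarrow> (real^'d \<Rightarrow> real) \<Rightarrow> real^'d \<Rightarrow> real) \<Rightarrow> bool" where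
  "bidiff_op P \<longleftrightarrow> (\<exists>F c. finite F \<and> (\<forall>p\<in>F. smooth (c p)) \<and>
     (\<forall>f g. smooth f \<longrightarrow> smooth g \<longrightarrow>
        P f g = (\<lambda>x. \<Sum>p\<in>F. c p x * dw (fst p) f x * dw (snd p) g x)))"

text \<open>The product a \<star> b = \<Sum>_j \<epsilon>^j \<Pis>_j(a,b), extended R[[\<epsilon>]]-bilinearly.\<close>
definition star_of :: "(nat \<Rightarrow> (real^'d::finite \<Rightarrow> real) \<Rightarrow> (real^'d \<Rightarrow> real) \<Rightarrow> real^'d \<Rightarrow> real)
     \<Rightarrow> (nat \<Rightarrow> real^'d \<Rightarrow> real) \<Rightarrow> (nat \<Rightarrow> real^'d \<Rightarrow> real) \<Rightarrow> nat \<Rightarrow> real^'d \<Rightarrow> real" where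
  "star_of Pis a b = (\<lambda>k x. \<Sum>i\<le>k. \<Sum>j\<le>k - i. Pis i (a j) (b (k - i - j)) x)"

text \<open>Structure constants: c k i j = c_k^{ij}, i.e. [X^i,X^j] = \<Sum>_k c k i j X^k.\<close>
definition lie_structure :: "('d::finite \<Rightarrow> 'd \<Rightarrow> 'd \<Rightarrow> real) \<Rightarrow> bool" where
  "lie_structure c \<longleftrightarrow> (\<forall>k i j. c k i j = - c k j i) \<and>
     (\<forall>i j l m. (\<Sum>k\<in>UNIV. c k i j * c m k l + c k j l * c m k i + c k l i * c m k j) = 0)"

definition poisson :: "('d::finite \<Rightarrow> 'd \<Rightarrow> 'd \<Rightarrow> real) \<Rightarrow> (real^'d \<Rightarrow> real) \<Rightarrow> (real^'d \<Rightarrow> real) \<Rightarrow> real^'d \<Rightarrow> real" where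
  "poisson c a b = (\<lambda>x. \<Sum>i\<in>UNIV. \<Sum>j\<in>UNIV. \<Sum>k\<in>UNIV. c k i j * x $ k * dw [i] a x * dw [j] b x)"

definition is_star_product :: "('d::finite \<Rightarrow> 'd \<Rightarrow> 'd \<Rightarrow> real) \<Rightarrow>
     (nat \<Rightarrow> (real^'d \<Rightarrow> real) \<Rightarrow> (real^'d \<Rightarrow> real) \<Rightarrow> real^'d \<Rightarrow> real) \<Rightarrow> bool" where
  "is_star_product c Pis \<longleftrightarrow>
     (\<forall>j. bidiff_op (Pis j)) \<and>
     (\<forall>a b e. fseries a \<longrightarrow> fseries b \<longrightarrow> fseries e \<longrightarrow>
        star_of Pis (star_of Pis a b) e = star_of Pis a (star_of Pis b e)) \<and>
     (\<forall>f g. smooth f \<longrightarrow> smooth g \<longrightarrow> Pis 0 f g = (\<lambda>x. f x * g x)) \<and>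
     (\<forall>f g. smooth f \<longrightarrow> smooth g \<longrightarrow> (\<lambda>x. Pis 1 f g x - Pis 1 g f x) = poisson c f g)"

text \<open>Monomials are multisets of coordinate indices.\<close>
definition mono :: "'d::finite multiset \<Rightarrow> real^'d \<Rightarrow> real" where
  "mono M = (\<lambda>x. \<Prod>i\<in>UNIV. (x $ i) ^ count M i)"

text \<open>Real polynomial functions of degree at most N (N < 0 means the zero function).\<close>
definition poly_le :: "int \<Rightarrow> (real^'d::finite \<Rightarrow> real) \<Rightarrow> bool" where
  "poly_le N f \<longleftrightarrow> (\<exists>a. f = (\<lambda>x. \<Sum>M\<in>{M. int (size M) \<le> N}. a M * mono M x))"

definition poly_deg :: "nat \<Rightarrow> (real^'d::finite \<Rightarrow> real) \<Rightarrow> bool" where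
  "poly_deg n f \<longleftrightarrow> poly_le (int n) f \<and> (\<forall>k<n. \<not> poly_le (int k) f)"

text \<open>Elements of (\<Sum>_{j\<le>N} S^j(g))[[\<epsilon>]].\<close>
definition polyser :: "int \<Rightarrow> (nat \<Rightarrow> real^'d::finite \<Rightarrow> real) \<Rightarrow> bool" where
  "polyser N s \<longleftrightarrow> (\<forall>k. poly_le N (s k))"

definition const_ser :: "(real^'d::finite \<Rightarrow> real) \<Rightarrow> nat \<Rightarrow> real^'d \<Rightarrow> real" where
  "const_ser f = (\<lambda>k. if k = 0 then f else (\<lambda>_. 0))"

definition scal :: "real fps \<Rightarrow> (nat \<Rightarrow> real^'d::finite \<Rightarrow> real) \<Rightarrow> nat \<Rightarrow> real^'d \<Rightarrow> real" where
  "scal r a = (\<lambda>k x. \<Sum>i\<le>k. fps_nth r i * a (k - i) x)"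

definition P1 :: "(nat \<Rightarrow> (real^'d::finite \<Rightarrow> real) \<Rightarrow> (real^'d \<Rightarrow> real) \<Rightarrow> real^'d \<Rightarrow> real) \<Rightarrow> bool" where
  "P1 Pis \<longleftrightarrow> (\<forall>n m p q. poly_deg n p \<longrightarrow> poly_deg m q \<longrightarrow>
     (\<exists>r. (\<forall>k x. star_of Pis (const_ser p) (const_ser q) k x = const_ser (\<lambda>x. p x * q x) k x + r k x)
          \<and> polyser (int n + int m - 1) r))"

text \<open>p^\<star> for the monomial X^{i_1}\<cdots>X^{i_m} written as the word [i_1,...,i_m].\<close>
fun starw :: "(nat \<Rightarrow> (real^'d::finite \<Rightarrow> real) \<Rightarrow> (real^'d \<Rightarrow> real) \<Rightarrow> real^'d \<Rightarrow> real)
     \<Rightarrow> 'd list \<Rightarrow> nat \<Rightarrow> real^'d \<Rightarrow> real" where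
  "starw Pis [] = const_ser (\<lambda>_. 1)"
| "starw Pis [i] = const_ser (coord i)"
| "starw Pis (i # j # w) = star_of Pis (const_ser (coord i)) (starw Pis (j # w))"

end

theory Submission
  imports Defs
begin

lemma finite_S: "finite {M::'d::finite multiset. int (size M) \<le> N}"
proof -
  have "{M::'d multiset. int (size M) \<le> N} \<subseteq> (\<Union>n\<in>{..nat N}. multisets_of_size UNIV n)"
    by (auto simp: multisets_of_size_def)
  moreover have "finite (\<Union>n\<in>{..nat N}. multisets_of_size (UNIV::'d set) n)" by auto
  ultimately show ?thesis by (rule finite_subset)
qed

lemma poly_le_zero: "poly_le N (\<lambda>_. 0)"
  unfolding poly_le_def by (rule exI[of _ "\<lambda>_. 0"]) simp

lemma poly_le_add: "poly_le N f \<Longrightarrow> poly_le N g \<Longrightarrow> poly_le N (\<lambda>x. f x + g x)"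
  unfolding poly_le_def
  apply (elim exE)
  subgoal for a b by (rule exI[of _ "\<lambda>M. a M + b M"]) (simp add: algebra_simps sum.distrib)
  done

lemma poly_le_cmult: "poly_le N f \<Longrightarrow> poly_le N (\<lambda>x. c * f x)"
  unfolding poly_le_def
  apply (elim exE)
  subgoal for a by (rule exI[of _ "\<lambda>M. c * a M"]) (simp add: algebra_simps sum_distrib_left)
  done

lemma poly_le_diff: "poly_le N f \<Longrightarrow> poly_le N g \<Longrightarrow> poly_le N (\<lambda>x. f x - g x)"
  using poly_le_add[of N f "\<lambda>x. (-1) * g x"] poly_le_cmult[of N g "-1"] by simp

lemma poly_le_sum: "finite F \<Longrightarrow> (\<And>j. j \<in> F \<Longrightarrow> poly_le N (f j)) \<Longrightarrow> poly_le N (\<lambda>x. \<Sum>j\<in>F. f j x)"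
  by (induction F rule: finite_induct) (auto intro: poly_le_zero poly_le_add)

lemma poly_le_alt: "poly_le N f \<longleftrightarrow> (\<exists>F a. finite F \<and> (\<forall>M\<in>F. int (size M) \<le> N) \<and> f = (\<lambda>x. \<Sum>M\<in>F. a M * mono M x))"
proof
  assume "poly_le N f" then show "\<exists>F a. finite F \<and> (\<forall>M\<in>F. int (size M) \<le> N) \<and> f = (\<lambda>x. \<Sum>M\<in>F. a M * mono M x)"
    unfolding poly_le_def using finite_S by blast
next
  assume "\<exists>F a. finite F \<and> (\<forall>M\<in>F. int (size M) \<le> N) \<and> f = (\<lambda>x. \<Sum>M\<in>F. a M * mono M x)"
  then obtain F a where F: "finite F" "\<forall>M\<in>F. int (size M) \<le> N" and f: "f = (\<lambda>x. \<Sum>M\<in>F. a M * mono M x)" by blast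
  show "poly_le N f" unfolding poly_le_def
  proof (rule exI[of _ "\<lambda>M. if M \<in> F then a M else 0"], rule ext)
    fix x
    show "f x = (\<Sum>M\<in>{M. int (size M) \<le> N}. (if M \<in> F then a M else 0) * mono M x)"
      unfolding f by (rule sum.mono_neutral_cong_left) (use F finite_S in auto)
  qed
qed

lemma poly_le_mono_deg: "poly_le N f \<Longrightarrow> N \<le> N' \<Longrightarrow> poly_le N' f"
  unfolding poly_le_alt by force

lemma poly_le_mono: "int (size M) \<le> N \<Longrightarrow> poly_le N (mono M)"
  unfolding poly_le_alt by (rule exI[of _ "{M}"], rule exI[of _ "\<lambda>_. 1"]) auto

lemma mono_add: "mono (add_mset i M) x = x $ i * mono M x"
proof -
  have "mono (add_mset i M) x = (\<Prod>j\<in>UNIV. (if j = i then x $ i else 1) * (x $ j) ^ count M j)"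
    unfolding mono_def by (rule prod.cong) auto
  also have "\<dots> = x $ i * mono M x" unfolding mono_def prod.distrib by simp
  finally show ?thesis .
qed

lemma mono_empty: "mono {#} = (\<lambda>_. 1)"
  unfolding mono_def by simp

lemma poly_le_coord_mult: "poly_le N f \<Longrightarrow> poly_le (N + 1) (\<lambda>x. x $ i * f x)"
  unfolding poly_le_alt
proof (elim exE conjE)
  fix F a assume F: "finite F" "\<forall>M\<in>F. int (size M) \<le> N" and f: "f = (\<lambda>x. \<Sum>M\<in>F. a M * mono M x)"
  have inj: "inj_on (add_mset i) F" by (auto simp: inj_on_def)
  show "\<exists>F a. finite F \<and> (\<forall>M\<in>F. int (size M) \<le> N + 1) \<and> (\<lambda>x. x $ i * f x) = (\<lambda>x. \<Sum>M\<in>F. a M * mono M x)"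
  proof (intro exI conjI)
    show "finite (add_mset i ` F)" using F by auto
    show "\<forall>M\<in>add_mset i ` F. int (size M) \<le> N + 1" using F by auto
    show "(\<lambda>x. x $ i * f x) = (\<lambda>x. \<Sum>M\<in>add_mset i ` F. a (M - {#i#}) * mono M x)"
      unfolding f sum.reindex[OF inj] by (auto simp: mono_add sum_distrib_left algebra_simps)
  qed
qed


inductive_set PP :: "(real^'d::finite \<Rightarrow> real) set" where
  PP_const: "(\<lambda>_. c) \<in> PP"
| PP_coord: "(\<lambda>x. x $ i) \<in> PP"
| PP_add: "f \<in> PP \<Longrightarrow> g \<in> PP \<Longrightarrow> (\<lambda>x. f x + g x) \<in> PP"
| PP_mult: "f \<in> PP \<Longrightarrow> g \<in> PP \<Longrightarrow> (\<lambda>x. f x * g x) \<in> PP"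

lemma PP_cont: "f \<in> PP \<Longrightarrow> continuous_on UNIV f"
  by (induction rule: PP.induct) (auto intro!: continuous_intros)

lemma PP_deriv: "f \<in> PP \<Longrightarrow> \<exists>g\<in>PP. \<forall>y. ((\<lambda>t. f (y + t *\<^sub>R axis i 1)) has_real_derivative g y) (at 0)"
proof (induction rule: PP.induct)
  case (PP_const c)
  then show ?case by (intro bexI[of _ "\<lambda>_. 0"]) (auto intro: PP.intros)
next
  case (PP_coord j)
  show ?case
    by (rule bexI[of _ "\<lambda>_. axis i 1 $ j"]) (auto intro!: derivative_eq_intros PP.intros)
next
  case (PP_add f g)
  then obtain f' g' where "f' \<in> PP" "g' \<in> PP"
    "\<forall>y. ((\<lambda>t. f (y + t *\<^sub>R axis i 1)) has_real_derivative f' y) (at 0)"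
    "\<forall>y. ((\<lambda>t. g (y + t *\<^sub>R axis i 1)) has_real_derivative g' y) (at 0)" by blast
  then show ?case
    by (intro bexI[of _ "\<lambda>y. f' y + g' y"]) (auto intro!: derivative_eq_intros PP.intros)
next
  case (PP_mult f g)
  then obtain f' g' where "f' \<in> PP" "g' \<in> PP"
    "\<forall>y. ((\<lambda>t. f (y + t *\<^sub>R axis i 1)) has_real_derivative f' y) (at 0)"
    "\<forall>y. ((\<lambda>t. g (y + t *\<^sub>R axis i 1)) has_real_derivative g' y) (at 0)" by blast
  then show ?case using PP_mult.hyps
    apply (intro bexI[of _ "\<lambda>y. f' y * g y + g' y * f y"])
     apply (auto intro!: PP.intros)
    subgoal for y using DERIV_mult[of "\<lambda>t. f (y + t *\<^sub>R axis i 1)" "f' y" 0 UNIV "\<lambda>t. g (y + t *\<^sub>R axis i 1)" "g' y"]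
      by simp
    done
qed

lemma PP_partial: "f \<in> PP \<Longrightarrow> partial i f \<in> PP"
proof -
  assume "f \<in> PP"
  then obtain g where g: "g \<in> PP" "\<forall>y. ((\<lambda>t. f (y + t *\<^sub>R axis i 1)) has_real_derivative g y) (at 0)"
    using PP_deriv by blast
  have "partial i f = g" unfolding partial_def using g(2) by (auto intro!: DERIV_imp_deriv)
  then show ?thesis using g by simp
qed

lemma PP_dw: "f \<in> PP \<Longrightarrow> dw u f \<in> PP"
  by (induction u) (auto intro: PP_partial)

lemma PP_smooth: "f \<in> PP \<Longrightarrow> smooth f"
  unfolding smooth_def
proof (intro allI conjI)
  fix u i x assume "f \<in> PP"
  then have "dw u f \<in> PP" by (rule PP_dw)
  then show "continuous_on UNIV (dw u f)" by (rule PP_cont)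
  from PP_deriv[OF \<open>dw u f \<in> PP\<close>, of i] show "(\<lambda>t. dw u f (x + t *\<^sub>R axis i 1)) differentiable at 0"
    using real_differentiable_def by blast
qed

lemma PP_sum: "finite F \<Longrightarrow> (\<And>j. j \<in> F \<Longrightarrow> f j \<in> PP) \<Longrightarrow> (\<lambda>x. \<Sum>j\<in>F. f j x) \<in> PP"
  by (induction F rule: finite_induct) (auto intro: PP.intros)

lemma PP_prod: "finite F \<Longrightarrow> (\<And>j. j \<in> F \<Longrightarrow> f j \<in> PP) \<Longrightarrow> (\<lambda>x. \<Prod>j\<in>F. f j x) \<in> PP"
  by (induction F rule: finite_induct) (auto intro: PP.intros)

lemma PP_power: "f \<in> PP \<Longrightarrow> (\<lambda>x. f x ^ n) \<in> PP"
  by (induction n) (auto intro: PP.intros)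

lemma PP_mono: "mono M \<in> PP"
  unfolding mono_def by (intro PP_prod PP_power PP.intros) auto

lemma poly_le_PP: "poly_le N f \<Longrightarrow> f \<in> PP"
  unfolding poly_le_def using finite_S by (auto intro!: PP_sum PP.intros PP_mono)

lemma poly_le_smooth: "poly_le N f \<Longrightarrow> smooth f"
  by (intro PP_smooth poly_le_PP)


lemma dw_zero: "dw u (\<lambda>_. 0) = (\<lambda>_. 0)"
  by (induction u) (auto simp: partial_def)

lemma smooth_zero: "smooth (\<lambda>_. 0)"
  by (rule PP_smooth) (rule PP_const)

lemma Pis_zero_left:
  assumes "is_star_product c Pis" "smooth g"
  shows "Pis j (\<lambda>_. 0) g = (\<lambda>_. 0)"
proof -
  from assms(1) have "bidiff_op (Pis j)" unfolding is_star_product_def by blast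
  then obtain F co where "\<forall>f g. smooth f \<longrightarrow> smooth g \<longrightarrow>
        Pis j f g = (\<lambda>x. \<Sum>p\<in>F. co p x * dw (fst p) f x * dw (snd p) g x)"
    unfolding bidiff_op_def by blast
  from this[rule_format, OF smooth_zero assms(2)] show ?thesis by (simp add: dw_zero)
qed

lemma Pis_zero_right:
  assumes "is_star_product c Pis" "smooth f"
  shows "Pis j f (\<lambda>_. 0) = (\<lambda>_. 0)"
proof -
  from assms(1) have "bidiff_op (Pis j)" unfolding is_star_product_def by blast
  then obtain F co where "\<forall>f g. smooth f \<longrightarrow> smooth g \<longrightarrow>
        Pis j f g = (\<lambda>x. \<Sum>p\<in>F. co p x * dw (fst p) f x * dw (snd p) g x)"
    unfolding bidiff_op_def by blast
  from this[rule_format, OF assms(2) smooth_zero] show ?thesis by (simp add: dw_zero)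
qed

lemma sum_only0: "(\<And>j. j > 0 \<Longrightarrow> j \<le> (m::nat) \<Longrightarrow> f j = (0::real)) \<Longrightarrow> (\<Sum>j\<le>m. f j) = f 0"
proof -
  assume h: "\<And>j. j > 0 \<Longrightarrow> j \<le> m \<Longrightarrow> f j = 0"
  have "(\<Sum>j\<le>m. f j) = (\<Sum>j\<in>{0}. f j)"
    by (rule sum.mono_neutral_right) (use h in auto)
  then show ?thesis by simp
qed

lemma star_const_left:
  assumes "is_star_product c Pis" "smooth p" "\<And>m. smooth (b m)"
  shows "star_of Pis (const_ser p) b k x = (\<Sum>i\<le>k. Pis i p (b (k - i)) x)"
  unfolding star_of_def
proof (rule sum.cong[OF refl])
  fix i assume "i \<in> {..k}"
  show "(\<Sum>j\<le>k - i. Pis i (const_ser p j) (b (k - i - j)) x) = Pis i p (b (k - i)) x"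
    by (subst sum_only0) (auto simp: const_ser_def Pis_zero_left[OF assms(1) assms(3)])
qed

lemma star_const_const:
  assumes "is_star_product c Pis" "smooth p" "smooth q"
  shows "star_of Pis (const_ser p) (const_ser q) k x = Pis k p q x"
proof -
  have sm: "smooth (const_ser q m)" for m using assms(3) smooth_zero by (cases "m = 0") (auto simp: const_ser_def)
  have "star_of Pis (const_ser p) (const_ser q) k x = (\<Sum>i\<le>k. Pis i p (const_ser q (k - i)) x)"
    by (rule star_const_left[OF assms(1,2) sm])
  also have "\<dots> = (\<Sum>i\<in>{k}. Pis i p (const_ser q (k - i)) x)"
    by (rule sum.mono_neutral_right) (auto simp: const_ser_def Pis_zero_right[OF assms(1,2)])
  finally show ?thesis by (simp add: const_ser_def)
qed

lemma degree_exists: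
  assumes "poly_le (int A) p" shows "\<exists>d\<le>A. poly_deg d p"
proof -
  define d where "d = (LEAST k. poly_le (int k) p)"
  have "poly_le (int d) p" unfolding d_def by (rule LeastI[of _ A]) (rule assms)
  moreover have "d \<le> A" unfolding d_def by (rule Least_le) (rule assms)
  moreover have "\<forall>k<d. \<not> poly_le (int k) p" unfolding d_def using not_less_Least by blast
  ultimately show ?thesis unfolding poly_deg_def by blast
qed

lemma Pis_P1:
  assumes sp: "is_star_product c Pis" and p1: "P1 Pis"
    and p: "poly_le (int A) p" and q: "poly_le (int B) q" and k: "k \<ge> 1"
  shows "poly_le (int A + int B - 1) (Pis k p q)"
proof -
  obtain dp where dp: "dp \<le> A" "poly_deg dp p" using degree_exists[OF p] by blast
  obtain dq where dq: "dq \<le> B" "poly_deg dq q" using degree_exists[OF q] by blast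
  obtain r where r: "\<forall>k x. star_of Pis (const_ser p) (const_ser q) k x = const_ser (\<lambda>x. p x * q x) k x + r k x"
    "polyser (int dp + int dq - 1) r"
    using p1 dp(2) dq(2) unfolding P1_def by blast
  have "Pis k p q = r k"
  proof
    fix x
    have "Pis k p q x = star_of Pis (const_ser p) (const_ser q) k x"
      using star_const_const[OF sp poly_le_smooth[OF p] poly_le_smooth[OF q]] by simp
    also have "\<dots> = r k x" using r(1) k by (simp add: const_ser_def)
    finally show "Pis k p q x = r k x" .
  qed
  moreover have "poly_le (int dp + int dq - 1) (r k)" using r(2) unfolding polyser_def by blast
  ultimately show ?thesis using dp dq by (auto elim!: poly_le_mono_deg)
qed


lemma coord_mono: "coord i = mono {#i#}"
  by (rule ext) (simp add: coord_def mono_add mono_empty)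

lemma const_ser_poly: "poly_le N f \<Longrightarrow> poly_le N (const_ser f k)"
  by (cases "k = 0") (auto simp: const_ser_def poly_le_zero)

lemma lead:
  assumes sp: "is_star_product c Pis" and p1: "P1 Pis"
  shows "\<exists>r. polyser (int (length u) - 1) r \<and>
     (\<forall>k. starw Pis u k = (\<lambda>x. const_ser (mono (mset u)) k x + r k x))"
proof (induction u)
  case Nil
  show ?case
    by (rule exI[of _ "\<lambda>_ _. 0"]) (auto simp: polyser_def poly_le_zero mono_empty)
next
  case (Cons i u')
  show ?case
  proof (cases u')
    case Nil
    then show ?thesis
      by (intro exI[of _ "\<lambda>_ _. 0"]) (auto simp: polyser_def poly_le_zero coord_mono)
  next
    case (Cons j w)
    obtain r where r: "polyser (int (length u') - 1) r"
      "\<forall>k. starw Pis u' k = (\<lambda>x. const_ser (mono (mset u')) k x + r k x)"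
      using Cons.IH by blast
    define b where "b = starw Pis u'"
    define L where "L = length u'"
    have rk: "poly_le (int L - 1) (r k)" for k using r(1) unfolding polyser_def L_def by blast
    have bk: "poly_le (int L) (b k)" for k
      unfolding b_def r(2)[rule_format]
      by (rule poly_le_add, rule const_ser_poly, rule poly_le_mono) (auto simp: L_def intro: poly_le_mono_deg[OF rk])
    have cpoly: "poly_le 1 (coord i)" unfolding coord_mono by (rule poly_le_mono) simp
    define r' where "r' = (\<lambda>k x. x $ i * r k x + (\<Sum>i'\<in>{1..k}. Pis i' (coord i) (b (k - i')) x))"
    show ?thesis
    proof (intro exI conjI allI)
      show "polyser (int (length (i # u')) - 1) r'"
        unfolding polyser_def r'_def
      proof
        fix k
        have "poly_le (int L - 1 + 1) (\<lambda>x. x $ i * r k x)" by (rule poly_le_coord_mult[OF rk])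
        moreover have "poly_le (int 1 + int L - 1) (Pis i' (coord i) (b (k - i')))" if "i' \<in> {1..k}" for i'
          by (rule Pis_P1[OF sp p1]) (use cpoly bk that in auto)
        ultimately show "poly_le (int (length (i # u')) - 1) (\<lambda>x. x $ i * r k x + (\<Sum>i'\<in>{1..k}. Pis i' (coord i) (b (k - i')) x))"
          by (auto simp: L_def intro!: poly_le_add poly_le_sum)
      qed
      fix k
      show "starw Pis (i # u') k = (\<lambda>x. const_ser (mono (mset (i # u'))) k x + r' k x)"
      proof
        fix x
        have "starw Pis (i # u') k x = star_of Pis (const_ser (coord i)) b k x"
          by (simp add: Cons b_def)
        also have "\<dots> = (\<Sum>i'\<le>k. Pis i' (coord i) (b (k - i')) x)"
          by (rule star_const_left[OF sp poly_le_smooth[OF cpoly] poly_le_smooth[OF bk]])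
        also have "\<dots> = Pis 0 (coord i) (b k) x + (\<Sum>i'\<in>{1..k}. Pis i' (coord i) (b (k - i')) x)"
        proof -
          have "{..k} = insert 0 {1..k}" by auto
          then show ?thesis by simp
        qed
        also have "Pis 0 (coord i) (b k) x = x $ i * b k x"
          using sp poly_le_smooth[OF cpoly] poly_le_smooth[OF bk] unfolding is_star_product_def
          by (simp add: coord_def)
        also have "x $ i * b k x = const_ser (mono (mset (i # u'))) k x + x $ i * r k x"
          unfolding b_def r(2)[rule_format] by (simp add: const_ser_def mono_add algebra_simps)
        finally show "starw Pis (i # u') k x = const_ser (mono (mset (i # u'))) k x + r' k x"
          by (simp add: r'_def)
      qed
    qed
  qed
qed


lemma span:
  assumes sp: "is_star_product c Pis" and p1: "P1 Pis" and wM: "\<forall>M. mset (w M) = M"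
  shows "N \<ge> -1 \<Longrightarrow> polyser N s \<Longrightarrow> \<exists>co :: 'd::finite multiset \<Rightarrow> real fps.
     s = (\<lambda>k x. \<Sum>M\<in>{M. int (size M) \<le> N}. scal (co M) (starw Pis (w M)) k x)"
proof (induction N arbitrary: s rule: int_ge_induct)
  case base
  have e: "{M::'d multiset. int (size M) \<le> -1} = {}" by auto
  from base have "s = (\<lambda>k x. 0)" unfolding polyser_def poly_le_def e by auto
  then show ?case unfolding e by simp
next
  case (step N)
  define S where "S = (\<lambda>N. {M::'d multiset. int (size M) \<le> N})"
  define T where "T = {M::'d multiset. int (size M) = N + 1}"
  have finS: "finite (S N')" for N' unfolding S_def by (rule finite_S)
  have finT: "finite T" by (rule finite_subset[OF _ finS[of "N+1"]]) (auto simp: S_def T_def)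
  have SU: "S (N + 1) = S N \<union> T" "S N \<inter> T = {}" by (auto simp: S_def T_def)
  have "\<forall>k. \<exists>a. s k = (\<lambda>x. \<Sum>M\<in>S (N+1). a M * mono M x)"
    using step.prems unfolding polyser_def poly_le_def S_def by blast
  then obtain a where a: "\<And>k. s k = (\<lambda>x. \<Sum>M\<in>S (N+1). a k M * mono M x)" by metis
  have "\<forall>M. \<exists>r. polyser (int (size M) - 1) r \<and>
     (\<forall>k. starw Pis (w M) k = (\<lambda>x. const_ser (mono M) k x + r k x))"
    using lead[OF sp p1] wM by (metis size_mset)
  then obtain R where R: "\<And>M. polyser (int (size M) - 1) (R M)"
    "\<And>M k. starw Pis (w M) k = (\<lambda>x. const_ser (mono M) k x + R M k x)" by metis
  define cot where "cot = (\<lambda>M. Abs_fps (\<lambda>k. a k M))"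
  define t where "t = (\<lambda>k x. s k x - (\<Sum>M\<in>T. scal (cot M) (starw Pis (w M)) k x))"
  have sc: "scal (cot M) (starw Pis (w M)) k x = a k M * mono M x + (\<Sum>i\<le>k. a i M * R M (k - i) x)" for M k x
  proof -
    have "scal (cot M) (starw Pis (w M)) k x = (\<Sum>i\<le>k. a i M * (const_ser (mono M) (k - i) x + R M (k - i) x))"
      unfolding scal_def cot_def R(2) by simp
    also have "\<dots> = (\<Sum>i\<le>k. (if i = k then a k M * mono M x else 0)) + (\<Sum>i\<le>k. a i M * R M (k - i) x)"
      unfolding sum.distrib[symmetric] by (rule sum.cong) (auto simp: const_ser_def algebra_simps)
    finally show ?thesis by simp
  qed
  have tk: "t k = (\<lambda>x. (\<Sum>M\<in>S N. a k M * mono M x) - (\<Sum>M\<in>T. \<Sum>i\<le>k. a i M * R M (k - i) x))" for k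
  proof
    fix x
    have "s k x = (\<Sum>M\<in>S N. a k M * mono M x) + (\<Sum>M\<in>T. a k M * mono M x)"
      unfolding a SU(1) by (rule sum.union_disjoint) (use finS finT SU in auto)
    then show "t k x = (\<Sum>M\<in>S N. a k M * mono M x) - (\<Sum>M\<in>T. \<Sum>i\<le>k. a i M * R M (k - i) x)"
      unfolding t_def sc by (simp add: sum.distrib)
  qed
  have "polyser N t" unfolding polyser_def
  proof
    fix k
    show "poly_le N (t k)" unfolding tk
    proof (intro poly_le_diff poly_le_sum poly_le_cmult finS finT finite_atMost)
      fix M assume "M \<in> S N" then show "poly_le N (mono M)" by (intro poly_le_mono) (simp add: S_def)
    next
      fix M i assume "M \<in> T"
      then have "int (size M) - 1 = N" by (simp add: T_def)
      then show "poly_le N (R M (k - i))" using R(1)[of M] unfolding polyser_def by metis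
    qed
  qed
  then obtain co' where co': "t = (\<lambda>k x. \<Sum>M\<in>S N. scal (co' M) (starw Pis (w M)) k x)"
    using step.IH unfolding S_def by blast
  define co where "co = (\<lambda>M. if M \<in> T then cot M else co' M)"
  show ?case
  proof (intro exI ext)
    fix k x
    have "(\<Sum>M\<in>S (N+1). scal (co M) (starw Pis (w M)) k x) =
       (\<Sum>M\<in>S N. scal (co M) (starw Pis (w M)) k x) + (\<Sum>M\<in>T. scal (co M) (starw Pis (w M)) k x)"
      unfolding SU(1) by (rule sum.union_disjoint) (use finS finT SU in auto)
    also have "(\<Sum>M\<in>S N. scal (co M) (starw Pis (w M)) k x) = t k x"
      unfolding co' co_def using SU(2) by (intro sum.cong) auto
    also have "(\<Sum>M\<in>T. scal (co M) (starw Pis (w M)) k x) = (\<Sum>M\<in>T. scal (cot M) (starw Pis (w M)) k x)"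
      unfolding co_def by simp
    finally show "s k x = (\<Sum>M\<in>{M. int (size M) \<le> N + 1}. scal (co M) (starw Pis (w M)) k x)"
      unfolding t_def S_def by simp
  qed
qed

theorem lemma2p1p1:
  fixes c :: "'d::finite \<Rightarrow> 'd \<Rightarrow> 'd \<Rightarrow> real"
    and Pis :: "nat \<Rightarrow> (real^'d \<Rightarrow> real) \<Rightarrow> (real^'d \<Rightarrow> real) \<Rightarrow> real^'d \<Rightarrow> real"
    and w :: "'d multiset \<Rightarrow> 'd list"
    and n :: nat
  assumes "lie_structure c"
    and "is_star_product c Pis"
    and "P1 Pis"
    and "\<forall>M. mset (w M) = M"
  shows "(\<forall>M. size M \<le> n \<longrightarrow> polyser (int n) (starw Pis (w M))) \<and>
         (\<forall>s. polyser (int n) s \<longrightarrow>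
            (\<exists>co :: 'd multiset \<Rightarrow> real fps.
               s = (\<lambda>k x. \<Sum>M\<in>{M. size M \<le> n}. scal (co M) (starw Pis (w M)) k x)))"
proof (intro conjI allI impI)
  fix M :: "'d multiset" assume sz: "size M \<le> n"
  obtain r where r: "polyser (int (length (w M)) - 1) r"
    "\<forall>k. starw Pis (w M) k = (\<lambda>x. const_ser (mono (mset (w M))) k x + r k x)"
    using lead[OF assms(2,3)] by blast
  have len: "length (w M) = size M" using assms(4) by (metis size_mset)
  show "polyser (int n) (starw Pis (w M))" unfolding polyser_def
  proof
    fix k
    have "poly_le (int (size M)) (r k)"
    proof (rule poly_le_mono_deg)
      show "poly_le (int (size M) - 1) (r k)" using r(1) len unfolding polyser_def by simp
    qed simp
    then show "poly_le (int n) (starw Pis (w M) k)" unfolding r(2)[rule_format] using assms(4) sz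
      by (auto intro!: poly_le_add const_ser_poly poly_le_mono elim!: poly_le_mono_deg)
  qed
next
  fix s :: "nat \<Rightarrow> real^'d \<Rightarrow> real" assume "polyser (int n) s"
  then obtain co :: "'d multiset \<Rightarrow> real fps" where
    "s = (\<lambda>k x. \<Sum>M\<in>{M. int (size M) \<le> int n}. scal (co M) (starw Pis (w M)) k x)"
    using span[OF assms(2,3,4), of "int n" s] by auto
  then show "\<exists>co :: 'd multiset \<Rightarrow> real fps.
               s = (\<lambda>k x. \<Sum>M\<in>{M. size M \<le> n}. scal (co M) (starw Pis (w M)) k x)"
    by auto
qed

end
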